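(* Let $m=k^r$ with $k\ge 5$ and $r\ge 2$, let $T=A_m$, $G\in\{A_m,S_m\}$, and suppose $H=(S_k\wr S_r)\cap G$ is a maximal subgroup of $G$, where $S_k\wr S_r$ is embedded in $S_m$ via its product action on $\Gamma^r$, $\Gamma=\{1,\dots,k\}$. Consider $G$ acting on the cosets of $H$, of degree $n$. Then $\mathrm{ifix}(T)>n^{4/9}$.
   Context: The product action: $(\gamma_1,\dots,\gamma_r)^{(x_1,\dots,x_r)\sigma}=(\gamma_1^{x_1},\dots,\gamma_r^{x_r})^\sigma$, where $\sigma\in S_r$ permutes coordinates. $\mathrm{ifix}(T)=\max\{\mathrm{fix}(t): t\in T \text{ an involution}\}$, where $\mathrm{fix}(t)$ is the number of fixed points of $t$ on the coset space. *)

theory Defs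
  imports Complex_Main "HOL-Algebra.Coset" "HOL-Combinatorics.Permutations"
begin

definition Sym_grp :: "'a set \<Rightarrow> ('a \<Rightarrow> 'a) monoid" where
  "Sym_grp S = \<lparr>carrier = {p. p permutes S}, monoid.mult = (\<circ>), one = id\<rparr>"

definition Alt_grp :: "'a set \<Rightarrow> ('a \<Rightarrow> 'a) monoid" where
  "Alt_grp S = \<lparr>carrier = {p. p permutes S \<and> evenperm p}, monoid.mult = (\<circ>), one = id\<rparr>"

text \<open>Gamma^r with Gamma = {0..<k} (a k-element set), coordinates indexed by {0..<r}.\<close>

definition prod_dom :: "nat \<Rightarrow> nat \<Rightarrow> (nat \<Rightarrow> nat) set" where
  "prod_dom k r = PiE {0..<r} (\<lambda>_. {0..<k})"

text \<open>Image of S_k wr S_r in Sym(Gamma^r) under the product action: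
  gamma^((x_1,..,x_r) sigma) = (gamma_1^x_1, ..., gamma_r^x_r)^sigma, where sigma moves
  coordinate i to position sigma(i), i.e. the new j-th coordinate is x_(inv sigma j) applied
  to gamma_(inv sigma j).\<close>

definition wreath_prod_action :: "nat \<Rightarrow> nat \<Rightarrow> ((nat \<Rightarrow> nat) \<Rightarrow> (nat \<Rightarrow> nat)) set" where
  "wreath_prod_action k r =
     {p. \<exists>\<sigma> x. \<sigma> permutes {0..<r} \<and> (\<forall>i<r. x i permutes {0..<k}) \<and>
          p = (\<lambda>\<gamma>. if \<gamma> \<in> prod_dom k r
                     then restrict (\<lambda>j. x (Hilbert_Choice.inv \<sigma> j) (\<gamma> (Hilbert_Choice.inv \<sigma> j))) {0..<r}
                     else \<gamma>)}"

definition maximal_subgroup :: "'a set \<Rightarrow> ('a, 'b) monoid_scheme \<Rightarrow> bool" where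
  "maximal_subgroup H G \<longleftrightarrow> subgroup H G \<and> H \<noteq> carrier G \<and>
     (\<forall>K. subgroup K G \<and> H \<subseteq> K \<longrightarrow> K = H \<or> K = carrier G)"

definition coset_fix :: "('a, 'b) monoid_scheme \<Rightarrow> 'a set \<Rightarrow> 'a \<Rightarrow> nat" where
  "coset_fix G H g = card {C \<in> rcosets\<^bsub>G\<^esub> H. C #>\<^bsub>G\<^esub> g = C}"

definition ifix :: "('a, 'b) monoid_scheme \<Rightarrow> 'a set \<Rightarrow> 'a set \<Rightarrow> nat" where
  "ifix G H T = Max {coset_fix G H t | t. t \<in> T \<and> t \<noteq> \<one>\<^bsub>G\<^esub> \<and> t \<otimes>\<^bsub>G\<^esub> t = \<one>\<^bsub>G\<^esub>}"

end

theory Submission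
  imports Defs
begin
lemma (in group) fixed_coset_iff:
  assumes H: "subgroup H G" and x: "x \<in> carrier G" and t: "t \<in> carrier G"
  shows "(H #> x) #> t = H #> x \<longleftrightarrow> x \<otimes> t \<otimes> inv x \<in> H"
proof -
  interpret subgroup H G by fact
  have eq: "(H #> x) #> t = H #> (x \<otimes> t)" using coset_mult_assoc[OF subset x t] .
  have "H #> (x \<otimes> t) = H #> x \<longleftrightarrow> x \<otimes> t \<in> H #> x"
  proof
    assume "H #> (x \<otimes> t) = H #> x"
    moreover have "x \<otimes> t \<in> H #> (x \<otimes> t)" using rcos_self[OF _ H] x t by auto
    ultimately show "x \<otimes> t \<in> H #> x" by simp
  next
    assume "x \<otimes> t \<in> H #> x"
    then show "H #> (x \<otimes> t) = H #> x" using repr_independence[OF _ x H] by simp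
  qed
  also have "\<dots> \<longleftrightarrow> x \<otimes> t \<otimes> inv x \<in> H" using rcos_module[OF is_group x] x t by auto
  finally show ?thesis using eq by simp
qed

lemma (in group) coset_fix_bound:
  assumes fin: "finite (carrier G)" and H: "subgroup H G" and t: "t \<in> carrier G"
    and S: "S \<subseteq> H" and conj: "\<And>s. s \<in> S \<Longrightarrow> \<exists>x\<in>carrier G. x \<otimes> t \<otimes> inv x = s"
  shows "card {x \<in> carrier G. x \<otimes> t = t \<otimes> x} * card S \<le> card {C \<in> rcosets H. C #> t = C} * card H"
proof -
  interpret subgroup H G by fact
  define X where "X = {x \<in> carrier G. x \<otimes> t \<otimes> inv x \<in> H}"
  define Cen where "Cen = {x \<in> carrier G. x \<otimes> t = t \<otimes> x}"
  define Fx where "Fx = {C \<in> rcosets H. C #> t = C}"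
  have finH: "finite H" using finite_subset[OF subset fin] .
  have finS: "finite S" using finite_subset[OF S finH] .
  have XU: "X = \<Union> Fx"
  proof
    show "X \<subseteq> \<Union> Fx"
    proof
      fix x assume "x \<in> X"
      then have x: "x \<in> carrier G" and xt: "x \<otimes> t \<otimes> inv x \<in> H" by (auto simp: X_def)
      have "H #> x \<in> Fx" using fixed_coset_iff[OF H x t] xt x by (auto simp: Fx_def RCOSETS_def)
      moreover have "x \<in> H #> x" using rcos_self[OF x H] .
      ultimately show "x \<in> \<Union> Fx" by blast
    qed
  next
    show "\<Union> Fx \<subseteq> X"
    proof
      fix y assume "y \<in> \<Union> Fx"
      then obtain x where x: "x \<in> carrier G" and fx: "(H #> x) #> t = H #> x" and y: "y \<in> H #> x"
        by (auto simp: Fx_def RCOSETS_def)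
      have y': "y \<in> carrier G" using y x r_coset_subset_G subset by blast
      have hx: "H #> y = H #> x" using repr_independence[OF y x H] by simp
      have "(H #> y) #> t = H #> y" using fx hx by simp
      then show "y \<in> X" using fixed_coset_iff[OF H y' t] y' by (auto simp: X_def)
    qed
  qed
  have cardX: "card X = card H * card Fx"
  proof -
    have "card H * card Fx = card (\<Union> Fx)"
    proof (rule card_partition)
      show "\<And>c1 c2. \<lbrakk>c1 \<in> Fx; c2 \<in> Fx; c1 \<noteq> c2\<rbrakk> \<Longrightarrow> c1 \<inter> c2 = {}"
        using rcos_disjoint[OF H] by (auto simp: Fx_def pairwise_def disjnt_def)
      have "Fx \<subseteq> Pow (carrier G)" using rcosets_subset_PowG[OF H] by (auto simp: Fx_def)
      then show "finite Fx" using fin finite_subset by blast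
      show "finite (\<Union>Fx)" unfolding XU[symmetric] X_def using fin by simp
      show "\<And>c. c \<in> Fx \<Longrightarrow> card c = card H" using card_rcosets_equal[OF _ subset] by (auto simp: Fx_def)
    qed
    then show ?thesis using XU by simp
  qed
  have "\<forall>s\<in>S. \<exists>x. x \<in> carrier G \<and> x \<otimes> t \<otimes> inv x = s" using conj by blast
  then obtain xs where xs: "\<And>s. s \<in> S \<Longrightarrow> xs s \<in> carrier G \<and> xs s \<otimes> t \<otimes> inv (xs s) = s"
    by metis
  define Y where "Y s = (\<lambda>c. xs s \<otimes> c) ` Cen" for s
  have Yprop: "y \<in> carrier G \<and> y \<otimes> t \<otimes> inv y = s" if s: "s \<in> S" and yY: "y \<in> Y s" for s y
  proof -
    obtain c where c: "c \<in> Cen" and y: "y = xs s \<otimes> c" using yY by (auto simp: Y_def)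
    have xc: "xs s \<in> carrier G" and c': "c \<in> carrier G" and ct: "c \<otimes> t = t \<otimes> c"
      using xs[OF s] c by (auto simp: Cen_def)
    have "y \<otimes> t \<otimes> inv y = xs s \<otimes> (c \<otimes> t) \<otimes> inv c \<otimes> inv (xs s)"
      using xc c' t by (simp add: y inv_mult_group m_assoc)
    also have "\<dots> = xs s \<otimes> t \<otimes> (c \<otimes> inv c) \<otimes> inv (xs s)" using xc c' t ct by (simp add: m_assoc)
    also have "\<dots> = s" using xs[OF s] xc c' t by (simp add: m_assoc)
    finally show ?thesis using xc c' y by simp
  qed
  have Ysub: "\<Union>(Y ` S) \<subseteq> X" using Yprop S by (auto simp: X_def)
  have cardY: "card (Y s) = card Cen" if "s \<in> S" for s
    unfolding Y_def
  proof (rule card_image)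
    show "inj_on ((\<otimes>) (xs s)) Cen" using xs[OF that]
      by (auto simp: inj_on_def Cen_def)
  qed
  have finCen: "finite Cen" using fin by (auto simp: Cen_def)
  have "card Cen * card S = (\<Sum>s\<in>S. card (Y s))" using cardY by simp
  also have "\<dots> = card (\<Union>(Y ` S))"
  proof (rule card_UN_disjoint[symmetric])
    show "finite S" by fact
    show "\<forall>i\<in>S. finite (Y i)" using finCen by (auto simp: Y_def)
    show "\<forall>i\<in>S. \<forall>j\<in>S. i \<noteq> j \<longrightarrow> Y i \<inter> Y j = {}" using Yprop by blast
  qed
  also have "\<dots> \<le> card X" using Ysub by (rule card_mono[rotated]) (auto simp: X_def fin)
  finally show ?thesis using cardX by (simp add: Cen_def Fx_def mult.commute)
qed

lemma invol_permutes:
  assumes "\<And>x. f (f x) = x" "\<And>x. x \<notin> S \<Longrightarrow> f x = x"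
  shows "f permutes S"
  unfolding permutes_def using assms by metis

lemma transversal_exists:
  assumes "finite N" "\<And>x. t (t x) = x" "\<And>x. x \<in> N \<Longrightarrow> t x \<in> N" "\<And>x. x \<in> N \<Longrightarrow> t x \<noteq> x"
  shows "\<exists>A. A \<subseteq> N \<and> A \<inter> t ` A = {} \<and> A \<union> t ` A = N"
  using assms
proof (induction "card N" arbitrary: N rule: less_induct)
  case less
  show ?case
  proof (cases "N = {}")
    case True then show ?thesis by auto
  next
    case False
    then obtain a where a: "a \<in> N" by blast
    define N' where "N' = N - {a, t a}"
    have ta: "t a \<in> N" "t a \<noteq> a" using less a by auto
    have "card N' < card N" unfolding N'_def using a less(2) by (intro psubset_card_mono) auto
    moreover have "t x \<in> N'" if x: "x \<in> N'" for x
    proof -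
      have "x \<in> N" "x \<noteq> a" "x \<noteq> t a" using x unfolding N'_def by auto
      moreover have "t x \<noteq> a" using \<open>x \<noteq> t a\<close> less(3)[of x] by auto
      moreover have "t x \<noteq> t a" using \<open>x \<noteq> a\<close> less(3)[of x] less(3)[of a] by metis
      ultimately show ?thesis unfolding N'_def using less(4) by auto
    qed
    ultimately obtain A where A: "A \<subseteq> N'" "A \<inter> t ` A = {}" "A \<union> t ` A = N'"
      using less(1)[of N'] less(2-5) unfolding N'_def by auto
    show ?thesis
    proof (intro exI[of _ "insert a A"] conjI)
      show "insert a A \<subseteq> N" using A a unfolding N'_def by auto
      show "insert a A \<inter> t ` insert a A = {}"
      proof -
        have "a \<notin> t ` A"
        proof
          assume "a \<in> t ` A" then obtain y where "y \<in> A" "a = t y" by auto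
          then have "t a \<in> A" using less(3) by auto
          then show False using A(1) unfolding N'_def by auto
        qed
        moreover have "t a \<notin> A" using A(1) unfolding N'_def by auto
        moreover have "a \<notin> A" using A(1) unfolding N'_def by auto
        ultimately show ?thesis using A(2) ta by auto
      qed
      show "insert a A \<union> t ` insert a A = N" using A a ta unfolding N'_def by auto
    qed
  qed
qed

lemma invol_evenperm:
  assumes "finite A" "\<And>x. t (t x) = x" "A \<inter> t ` A = {}" "{x. t x \<noteq> x} = A \<union> t ` A"
  shows "permutation t \<and> (evenperm t \<longleftrightarrow> even (card A))"
  using assms
proof (induction A arbitrary: t rule: finite_induct)
  case empty
  then have "t = id" by auto
  then show ?case by simp
next
  case (insert a A)
  define t' where "t' x = (if x = a \<or> x = t a then x else t x)" for x
  have ta: "t a \<noteq> a" using insert.prems(3) by auto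
  have t'inv: "t' (t' x) = x" for x
  proof (cases "x = a \<or> x = t a")
    case True then show ?thesis unfolding t'_def by auto
  next
    case False
    then have "t x \<noteq> a" "t x \<noteq> t a" using insert.prems(1) by metis+
    then show ?thesis using False insert.prems(1) unfolding t'_def by auto
  qed
  have tA1: "t a \<in> t ` insert a A" "a \<in> insert a A" "t ` A \<subseteq> t ` insert a A" by auto
  have tA: "t a \<notin> A" "a \<notin> t ` A" using insert.prems(2) tA1 by blast+
  have disj: "A \<inter> t' ` A = {}"
  proof -
    have "t' ` A = t ` A" unfolding t'_def using insert.hyps(2) tA by (auto simp: image_def)
    then show ?thesis using insert.prems(2) by auto
  qed
  have supp: "{x. t' x \<noteq> x} = A \<union> t' ` A"
  proof -
    have "t' ` A = t ` A" unfolding t'_def using insert.hyps(2) tA by (auto simp: image_def)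
    moreover have "{x. t' x \<noteq> x} = {x. t x \<noteq> x} - {a, t a}" unfolding t'_def by auto
    moreover have "a \<notin> t ` A" "t a \<notin> A" "a \<notin> A" using tA insert.hyps by auto
    moreover have "t a \<notin> t ` A" using insert.hyps(2) insert.prems(1) by (metis image_iff)
    ultimately show ?thesis using insert.prems(3) by auto
  qed
  from insert.IH[OF t'inv disj supp] have IH: "permutation t'" "evenperm t' \<longleftrightarrow> even (card A)" by auto
  have teq: "t = Transposition.transpose a (t a) \<circ> t'"
    unfolding t'_def using insert.prems(1) ta by (auto simp: fun_eq_iff Transposition.transpose_def) metis
  have "permutation t" using teq IH permutation_compose permutation_swap_id by metis
  moreover have "evenperm t \<longleftrightarrow> even (card (insert a A))"
    using teq IH evenperm_comp[OF permutation_swap_id IH(1), of a "t a"] evenperm_swap[of a "t a"] ta insert.hyps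
    by simp
  ultimately show ?case by blast
qed

lemma centralizer_card:
  assumes fin: "finite \<Omega>" and tp: "t permutes \<Omega>" and tinv: "\<And>x. t (t x) = x"
    and A1: "A \<inter> t ` A = {}" and A2: "A \<union> t ` A = {x\<in>\<Omega>. t x \<noteq> x}"
  shows "2 ^ card A * fact (card A) * fact (card {x\<in>\<Omega>. t x = x})
           \<le> card {c. c permutes \<Omega> \<and> c \<circ> t = t \<circ> c}"
proof -
  define F where "F = {x\<in>\<Omega>. t x = x}"
  define e where "e E x = (if x \<in> E \<union> t ` E then t x else x)" for E x
  define cm :: "'a set \<times> ('a\<Rightarrow>'a) \<times> ('a\<Rightarrow>'a) \<Rightarrow> 'a \<Rightarrow> 'a" where "cm = (\<lambda>(E, \<pi>, \<rho>). e E \<circ> \<pi> \<circ> t \<circ> \<pi> \<circ> t \<circ> \<rho>)"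
  define D where "D = Pow A \<times> {\<pi>. \<pi> permutes A} \<times> {\<rho>. \<rho> permutes F}"
  have AO: "A \<subseteq> \<Omega>" "t ` A \<subseteq> \<Omega>" "F \<subseteq> \<Omega>" using A2 by (auto simp: F_def)
  have finA: "finite A" "finite F" using AO fin finite_subset by blast+
  have tA: "x \<in> A \<Longrightarrow> t x \<notin> A" for x using A1 by auto
  have tA2: "x \<in> t ` A \<Longrightarrow> t x \<in> A" for x using tinv by auto
  have At: "x \<in> A \<Longrightarrow> t x \<noteq> x" for x using A2 by auto
  have AF: "x \<in> A \<Longrightarrow> x \<notin> F" "x \<in> t ` A \<Longrightarrow> x \<notin> F" for x using A2 by (auto simp: F_def)
  have tF: "x \<in> F \<Longrightarrow> t x = x" for x by (auto simp: F_def)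
  have Om: "x \<in> \<Omega> \<Longrightarrow> x \<in> A \<or> x \<in> t ` A \<or> x \<in> F" for x using A2 by (auto simp: F_def)
  have nOm: "x \<notin> \<Omega> \<Longrightarrow> t x = x" for x using permutes_not_in[OF tp] .
  have cmA: "cm (E, \<pi>, \<rho>) x = (if \<pi> x \<in> E then t (\<pi> x) else \<pi> x)"
    if "E \<subseteq> A" "\<pi> permutes A" "\<rho> permutes F" "x \<in> A" for E \<pi> \<rho> x
  proof -
    have "\<rho> x = x" using permutes_not_in[OF that(3)] AF that(4) by auto
    moreover have "\<pi> (t x) = t x" using permutes_not_in[OF that(2)] tA that(4) by auto
    moreover have px: "\<pi> x \<in> A" using permutes_in_image[OF that(2)] that(4) by auto
    moreover have "\<pi> (t (\<pi> x)) = t (\<pi> x)" using permutes_not_in[OF that(2)] tA px by auto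
    moreover have "\<pi> x \<notin> t ` E" using px A1 that(1) by auto
    ultimately show ?thesis using that tinv by (auto simp: cm_def e_def)
  qed
  have cmtA: "cm (E, \<pi>, \<rho>) x = (if \<pi> (t x) \<in> E then \<pi> (t x) else t (\<pi> (t x)))"
    if "E \<subseteq> A" "\<pi> permutes A" "\<rho> permutes F" "x \<in> t ` A" for E \<pi> \<rho> x
  proof -
    have "\<rho> x = x" using permutes_not_in[OF that(3)] AF that(4) by auto
    moreover have "\<pi> x = x" using permutes_not_in[OF that(2)] A1 that(4) by auto
    moreover have px: "\<pi> (t x) \<in> A" using permutes_in_image[OF that(2)] that(4) tA2 by auto
    moreover have "\<pi> (t (\<pi> (t x))) = t (\<pi> (t x))" using permutes_not_in[OF that(2)] tA px by auto
    moreover have "t (\<pi> (t x)) \<in> t ` E \<longleftrightarrow> \<pi> (t x) \<in> E" using tinv by (metis image_iff)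
    moreover have "t (\<pi> (t x)) \<notin> E" using tA px that(1) by auto
    ultimately show ?thesis using that tinv by (auto simp: cm_def e_def)
  qed
  have cmF: "cm (E, \<pi>, \<rho>) x = \<rho> x"
    if "E \<subseteq> A" "\<pi> permutes A" "\<rho> permutes F" "x \<in> F" for E \<pi> \<rho> x
  proof -
    have rx: "\<rho> x \<in> F" using permutes_in_image[OF that(3)] that(4) by auto
    then have "\<pi> (\<rho> x) = \<rho> x" "t (\<rho> x) = \<rho> x" using permutes_not_in[OF that(2)] AF(1) tF by auto
    moreover have "\<rho> x \<notin> E \<union> t ` E" using rx AF that(1) by auto
    ultimately show ?thesis by (auto simp: cm_def e_def)
  qed
  have cmO: "cm (E, \<pi>, \<rho>) x = x"
    if "E \<subseteq> A" "\<pi> permutes A" "\<rho> permutes F" "x \<notin> \<Omega>" for E \<pi> \<rho> x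
  proof -
    have "x \<notin> F" "x \<notin> A" using AO that(4) by auto
    then have "\<rho> x = x" "\<pi> x = x" "t x = x" using permutes_not_in[OF that(3)] permutes_not_in[OF that(2)]
        nOm that(4) by auto
    moreover have "x \<notin> E \<union> t ` E" using that(1,4) AO by auto
    ultimately show ?thesis by (auto simp: cm_def e_def)
  qed
  have inC: "cm d permutes \<Omega> \<and> cm d \<circ> t = t \<circ> cm d" if "d \<in> D" for d
  proof -
    obtain E \<pi> \<rho> where d: "d = (E, \<pi>, \<rho>)" using prod_cases3 by blast
    have E: "E \<subseteq> A" and p: "\<pi> permutes A" and r: "\<rho> permutes F" using that d by (auto simp: D_def)
    have pO: "\<pi> permutes \<Omega>" using permutes_subset[OF p AO(1)] .
    have rO: "\<rho> permutes \<Omega>" using permutes_subset[OF r AO(3)] .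
    have eO: "e E permutes \<Omega>"
    proof (rule invol_permutes)
      show "e E (e E x) = x" for x
      proof (cases "x \<in> E \<union> t ` E")
        case True
        then have "t x \<in> E \<union> t ` E" using tinv by (auto simp: image_iff)
        then show ?thesis using True tinv by (simp add: e_def)
      qed (simp add: e_def)
      show "x \<notin> \<Omega> \<Longrightarrow> e E x = x" for x using E AO nOm by (auto simp: e_def)
    qed
    have "e E \<circ> \<pi> \<circ> t \<circ> \<pi> \<circ> t \<circ> \<rho> permutes \<Omega>" by (intro permutes_compose eO pO tp rO)
    then have perm: "cm d permutes \<Omega>" unfolding d cm_def by simp
    have comm: "cm d (t x) = t (cm d x)" for x
    proof -
      consider "x \<in> A" | "x \<in> t ` A" | "x \<in> F" | "x \<notin> \<Omega>" using Om by blast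
      then show ?thesis
      proof cases
        case 1
        then have "t x \<in> t ` A" by auto
        then show ?thesis using cmA[OF E p r 1] cmtA[OF E p r, of "t x"] tinv d by simp
      next
        case 2
        then have "t x \<in> A" using tA2 by auto
        then show ?thesis using cmtA[OF E p r 2] cmA[OF E p r, of "t x"] tinv d by simp
      next
        case 3
        then show ?thesis using cmF[OF E p r 3] tF permutes_in_image[OF r] d by simp
      next
        case 4
        then show ?thesis using cmO[OF E p r 4] nOm d by simp
      qed
    qed
    show ?thesis using perm comm by (auto simp: fun_eq_iff d)
  qed
  have inj: "inj_on cm D"
  proof (rule inj_onI)
    fix d1 d2 assume d1: "d1 \<in> D" and d2: "d2 \<in> D" and eq: "cm d1 = cm d2"
    obtain E1 \<pi>1 \<rho>1 where dd1: "d1 = (E1, \<pi>1, \<rho>1)" using prod_cases3 by blast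
    have E1: "E1 \<subseteq> A" and p1: "\<pi>1 permutes A" and r1: "\<rho>1 permutes F" using d1 dd1 by (auto simp: D_def)
    obtain E2 \<pi>2 \<rho>2 where dd2: "d2 = (E2, \<pi>2, \<rho>2)" using prod_cases3 by blast
    have E2: "E2 \<subseteq> A" and p2: "\<pi>2 permutes A" and r2: "\<rho>2 permutes F" using d2 dd2 by (auto simp: D_def)
    define rec where "rec v = (if v \<in> A then v else t v)" for v
    have rec1: "rec (cm (E1, \<pi>1, \<rho>1) x) = \<pi>1 x" if "x \<in> A" for x
      using cmA[OF E1 p1 r1 that] permutes_in_image[OF p1, of x] that tA tinv by (auto simp: rec_def)
    have rec2: "rec (cm (E2, \<pi>2, \<rho>2) x) = \<pi>2 x" if "x \<in> A" for x
      using cmA[OF E2 p2 r2 that] permutes_in_image[OF p2, of x] that tA tinv by (auto simp: rec_def)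
    have peq: "\<pi>1 = \<pi>2"
    proof
      fix x show "\<pi>1 x = \<pi>2 x"
      proof (cases "x \<in> A")
        case True then show ?thesis using rec1 rec2 eq dd1 dd2 by metis
      next
        case False then show ?thesis using permutes_not_in[OF p1] permutes_not_in[OF p2] by simp
      qed
    qed
    have req: "\<rho>1 = \<rho>2"
    proof
      fix x show "\<rho>1 x = \<rho>2 x"
      proof (cases "x \<in> F")
        case True then show ?thesis using cmF[OF E1 p1 r1 True] cmF[OF E2 p2 r2 True] eq dd1 dd2 by metis
      next
        case False then show ?thesis using permutes_not_in[OF r1] permutes_not_in[OF r2] by simp
      qed
    qed
    have Eeq: "E1 = E2"
    proof -
      have "y \<in> E1 \<longleftrightarrow> y \<in> E2" if y: "y \<in> A" for y
      proof -
        have "y \<in> \<pi>1 ` A" using permutes_image[OF p1] y by simp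
        then obtain x where x: "x \<in> A" "\<pi>1 x = y" by auto
        have py: "\<pi>1 x \<in> A" using x y by simp
        have "y \<in> E1 \<longleftrightarrow> cm (E1, \<pi>1, \<rho>1) x \<notin> A" using cmA[OF E1 p1 r1 x(1)] x py tA by auto
        moreover have "y \<in> E2 \<longleftrightarrow> cm (E2, \<pi>2, \<rho>2) x \<notin> A" using cmA[OF E2 p2 r2 x(1)] x py tA peq by auto
        ultimately show ?thesis using eq dd1 dd2 by simp
      qed
      then show ?thesis using E1 E2 by blast
    qed
    show "d1 = d2" using dd1 dd2 peq req Eeq by simp
  qed
  have cardD: "card D = 2 ^ card A * fact (card A) * fact (card F)"
    using finA by (simp add: D_def card_cartesian_product card_Pow card_permutations)
  have "card D = card (cm ` D)" using card_image[OF inj] by simp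
  also have "\<dots> \<le> card {c. c permutes \<Omega> \<and> c \<circ> t = t \<circ> c}"
  proof (rule card_mono)
    show "finite {c. c permutes \<Omega> \<and> c \<circ> t = t \<circ> c}"
      using finite_permutations[OF fin] by (rule finite_subset[rotated]) auto
    show "cm ` D \<subseteq> {c. c permutes \<Omega> \<and> c \<circ> t = t \<circ> c}" using inC by auto
  qed
  finally show ?thesis using cardD by (simp add: F_def)
qed

lemma even_half:
  assumes fin: "finite C" and u: "u \<in> C" "permutation u" "\<not> evenperm u"
    and cl: "\<And>c. c \<in> C \<Longrightarrow> u \<circ> c \<in> C" and pc: "\<And>c. c \<in> C \<Longrightarrow> permutation c"
  shows "card C \<le> 2 * card {c\<in>C. evenperm c}"
proof -
  let ?E = "{c\<in>C. evenperm c}" and ?O = "{c\<in>C. \<not> evenperm c}"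
  have "card C = card ?E + card ?O"
    using fin by (subst card_Un_disjoint[symmetric]) (auto intro: arg_cong[where f=card])
  moreover have "card ?O \<le> card ?E"
  proof -
    have "inj_on ((\<circ>) u) ?O"
    proof (rule inj_onI)
      fix x y assume "u \<circ> x = u \<circ> y"
      then show "x = y" using bij_is_inj[OF permutation_bijective[OF u(2)]]
        by (auto simp: fun_eq_iff inj_eq)
    qed
    moreover have "(\<circ>) u ` ?O \<subseteq> ?E" using cl u by (auto simp: evenperm_comp[OF u(2) pc])
    ultimately show ?thesis using fin by (metis (no_types, lifting) card_inj_on_le finite_subset mem_Collect_eq subsetI)
  qed
  ultimately show ?thesis by simp
qed

lemma Sym_group: "group (Sym_grp S)"
proof (rule groupI)
  show "\<exists>y\<in>carrier (Sym_grp S). y \<otimes>\<^bsub>Sym_grp S\<^esub> x = \<one>\<^bsub>Sym_grp S\<^esub>" if "x \<in> carrier (Sym_grp S)" for x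
    using that permutes_inv[of x S] permutes_inv_o(2)[of x S] by (auto simp: Sym_grp_def)
qed (auto simp: Sym_grp_def permutes_compose o_assoc)

lemma Alt_group: "finite S \<Longrightarrow> group (Alt_grp S)"
proof (rule groupI)
  assume fin: "finite S"
  show "\<exists>y\<in>carrier (Alt_grp S). y \<otimes>\<^bsub>Alt_grp S\<^esub> x = \<one>\<^bsub>Alt_grp S\<^esub>" if "x \<in> carrier (Alt_grp S)" for x
  proof -
    have x: "x permutes S" "evenperm x" using that by (auto simp: Alt_grp_def)
    have "permutation x" using x fin permutation_permutes by blast
    then show ?thesis using x permutes_inv[of x S] permutes_inv_o(2)[of x S] evenperm_inv
      by (auto simp: Alt_grp_def)
  qed
  show "x \<otimes>\<^bsub>Alt_grp S\<^esub> y \<in> carrier (Alt_grp S)" if "x \<in> carrier (Alt_grp S)" "y \<in> carrier (Alt_grp S)" for x y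
  proof -
    have "permutation x" "permutation y" using that fin permutation_permutes by (auto simp: Alt_grp_def)
    then show ?thesis using that by (auto simp: Alt_grp_def permutes_compose evenperm_comp)
  qed
qed (auto simp: Alt_grp_def o_assoc)

lemma card_perms_le: "finite S \<Longrightarrow> card {p. p permutes S \<and> P p} \<le> fact (card S)"
  using card_mono[OF finite_permutations[of S], of "{p. p permutes S \<and> P p}"] card_permutations[of S "card S"]
  by auto

lemma finite_perms: "finite S \<Longrightarrow> finite {p. p permutes S \<and> P p}"
  using finite_permutations[of S] by (rule finite_subset[rotated]) auto

lemma wreath_card:
  "finite (wreath_prod_action k r) \<and> card (wreath_prod_action k r) \<le> fact k ^ r * fact r"
proof -
  define D where "D = {\<sigma>. \<sigma> permutes {0..<r}} \<times> PiE {0..<r} (\<lambda>_. {p. p permutes {0..<k}})"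
  define \<Phi> where "\<Phi> = (\<lambda>(\<sigma>::nat \<Rightarrow> nat, x::nat \<Rightarrow> nat \<Rightarrow> nat). (\<lambda>\<gamma>::nat \<Rightarrow> nat. if \<gamma> \<in> prod_dom k r
                     then restrict (\<lambda>j. x (Hilbert_Choice.inv \<sigma> j) (\<gamma> (Hilbert_Choice.inv \<sigma> j))) {0..<r}
                     else \<gamma>))"
  have sub: "wreath_prod_action k r \<subseteq> \<Phi> ` D"
  proof
    fix p assume "p \<in> wreath_prod_action k r"
    then obtain \<sigma> x where s: "\<sigma> permutes {0..<r}" and x: "\<forall>i<r. x i permutes {0..<k}"
      and p: "p = (\<lambda>\<gamma>. if \<gamma> \<in> prod_dom k r
                     then restrict (\<lambda>j. x (Hilbert_Choice.inv \<sigma> j) (\<gamma> (Hilbert_Choice.inv \<sigma> j))) {0..<r}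
                     else \<gamma>)" unfolding wreath_prod_action_def by blast
    have inv: "Hilbert_Choice.inv \<sigma> j \<in> {0..<r}" if "j \<in> {0..<r}" for j
      using permutes_in_image[OF permutes_inv[OF s]] that by auto
    have "p = \<Phi> (\<sigma>, restrict x {0..<r})"
      unfolding p \<Phi>_def using inv by (auto simp: fun_eq_iff restrict_def)
    moreover have "(\<sigma>, restrict x {0..<r}) \<in> D" using s x by (auto simp: D_def)
    ultimately show "p \<in> \<Phi> ` D" by blast
  qed
  have "finite (wreath_prod_action k r)"
    by (rule finite_subset[OF sub]) (auto simp: D_def finite_permutations intro!: finite_imageI finite_PiE)
  have "card (wreath_prod_action k r) \<le> card (\<Phi> ` D)"
    by (rule card_mono[OF _ sub]) (auto simp: D_def finite_permutations intro!: finite_imageI finite_PiE)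
  also have "\<dots> \<le> card D" by (rule card_image_le) (auto simp: D_def finite_permutations intro!: finite_PiE)
  also have "card D = fact r * fact k ^ r"
    by (simp add: D_def card_cartesian_product card_PiE card_permutations)
  finally show ?thesis using \<open>finite (wreath_prod_action k r)\<close> by (simp add: mult.commute)
qed

lemma card_prod_dom: "card (prod_dom k r) = k ^ r"
  by (simp add: prod_dom_def card_PiE)

lemma finite_prod_dom: "finite (prod_dom k r)"
  by (simp add: prod_dom_def finite_PiE)

lemma fact_add_le: "fact (f + d) \<le> fact f * (f + d) ^ d"
proof (induction d)
  case 0 then show ?case by simp
next
  case (Suc d)
  have "fact (f + Suc d) = (f + Suc d) * fact (f + d)" by (simp add: algebra_simps)
  also have "\<dots> \<le> (f + Suc d) * (fact f * (f + d) ^ d)" using Suc by (intro mult_left_mono) auto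
  also have "\<dots> \<le> (f + Suc d) * (fact f * (f + Suc d) ^ d)"
    by (intro mult_left_mono power_mono) auto
  also have "\<dots> = fact f * (f + Suc d) ^ Suc d" by (simp add: algebra_simps)
  finally show ?case .
qed

lemma fact_le_pow_pred: "n \<ge> 1 \<Longrightarrow> fact n \<le> n ^ (n - 1)"
proof (induction n rule: nat_induct_at_least)
  case base then show ?case by simp
next
  case (Suc n)
  have "fact (Suc n) = Suc n * fact n" by simp
  also have "\<dots> \<le> Suc n * n ^ (n - 1)" using Suc by (intro mult_left_mono) auto
  also have "\<dots> \<le> Suc n * Suc n ^ (n - 1)" by (intro mult_left_mono power_mono) auto
  also have "\<dots> = Suc n ^ (Suc n - 1)" using Suc by (cases n) auto
  finally show ?case .
qed

lemma pow_le_exp_fact: "real n ^ n \<le> exp (real n) * fact n"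
proof (induction n)
  case 0 then show ?case by simp
next
  case (Suc n)
  show ?case
  proof (cases "n = 0")
    case True then show ?thesis by (simp add: exp_ge_add_one_self[of 1, simplified] order_trans[OF _ exp_ge_add_one_self])
  next
    case False
    have e: "(1 + 1 / of_nat n) ^ n \<le> exp (1::real)"
      by (rule exp_ge_one_plus_x_over_n_power_n) (use False in auto)
    have "real (Suc n) ^ n = real n ^ n * (1 + 1 / real n) ^ n"
      using False by (simp add: power_mult_distrib[symmetric] field_simps)
    also have "\<dots> \<le> exp (real n) * fact n * exp 1"
      using Suc e by (intro mult_mono) auto
    finally have "real (Suc n) ^ n \<le> exp (real n) * fact n * exp 1" .
    then have "real (Suc n) * real (Suc n) ^ n \<le> real (Suc n) * (exp (real n) * fact n * exp 1)"
      by (intro mult_left_mono) auto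
    also have "\<dots> = exp (real (Suc n)) * fact (Suc n)"
      by (simp add: exp_add[symmetric] algebra_simps)
    finally show ?thesis by simp
  qed
qed

lemma ln_fact_lower: "n \<ge> 1 \<Longrightarrow> real n * ln (real n) - real n \<le> ln (fact n)"
proof -
  assume n: "n \<ge> 1"
  have "ln (real n ^ n) \<le> ln (exp (real n) * fact n)"
    using pow_le_exp_fact[of n] n by (subst ln_le_cancel_iff) auto
  then show ?thesis using n by (simp add: ln_realpow ln_mult)
qed

lemma four_pow_ge: "r \<ge> 3 \<Longrightarrow> 3 * r + 7 \<le> 4 * (5::nat) ^ (r - 2)"
proof (induction r rule: nat_induct_at_least)
  case base then show ?case by simp
next
  case (Suc n)
  have "Suc n - 2 = Suc (n - 2)" using Suc by auto
  then have "(5::nat) ^ (Suc n - 2) = 5 * 5 ^ (n - 2)" by simp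
  then show ?case using Suc by simp
qed

lemma keyB:
  fixes K R Av L l2 lr lk1 lk2 :: real
  assumes K: "K \<ge> 5" and R: "R \<ge> 3" and Av: "Av \<ge> 1" "4 * Av \<ge> 3 * R + 7"
    and L: "L > 0" and lr: "lr \<le> (R - 2) * L" and l2: "l2 \<le> L / 2"
    and lk1: "2 * l2 + lk1 \<ge> 1 + L" and lk2: "2 * lk2 \<ge> 2 * L - 2 * ln (5/3)"
    and c: "1 + 2 * ln (5/3) \<le> 4/3 * L"
    and J: "J = 2 * (K - 1) * Av" and F: "Fv = (K - 2)^2 * Av"
  shows "8 * J * R * L + 5 * R * (K - 1) * L + 5 * R * lr
     < 9 * (J - 1) * l2 + 9 * (J * (l2 + lk1 + (R - 2) * L) - J) + 5 * (Fv * (2 * lk2 + (R - 2) * L) - Fv)"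
proof -
  have J0: "J \<ge> 0" and F0: "Fv \<ge> 0" using J F K Av by auto
  have T1: "9 * J * (2 * l2 + lk1) \<ge> 9 * J * (1 + L)" using lk1 J0 by (intro mult_left_mono) auto
  have T2a: "5 * Fv * (2 * lk2) \<ge> 5 * Fv * (2 * L - 2 * ln (5/3))" using lk2 F0 by (intro mult_left_mono) auto
  have T2b: "5 * Fv * (1 + 2 * ln (5/3)) \<le> 5 * Fv * (4/3 * L)" using c F0 by (intro mult_left_mono) auto
  have T3: "5 * R * lr \<le> 5 * R * ((R - 2) * L)" using lr R by (intro mult_left_mono) auto
  have B: "(K - 2)^2 * (15 * R - 20) + 6 * (K - 1) * (R - 9) \<ge> 5 * R * (K - 1)"
  proof -
    have k0: "0 \<le> (4 * K - 5) * (K - 5)" using K by simp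
    have k1: "4 * (K - 2)^2 \<ge> 9 * (K - 1)" using k0 by (simp add: power2_eq_square algebra_simps)
    have r1: "15 * R - 20 \<ge> 25/3 * R" using R by simp
    have "(K - 2)^2 * (15 * R - 20) \<ge> (K - 2)^2 * (25/3 * R)" using r1 by (intro mult_left_mono) auto
    moreover have "(K - 2)^2 * (25/3 * R) \<ge> 9/4 * (K - 1) * (25/3 * R)" using k1 R by (intro mult_right_mono) auto
    moreover have "6 * (K - 1) * (R - 9) \<ge> - 12 * R * (K - 1)"
    proof -
      have "6 * (K - 1) * (R - 9) + 12 * R * (K - 1) = (K - 1) * (18 * R - 54)" by (simp add: algebra_simps)
      moreover have "(K - 1) * (18 * R - 54) \<ge> 0" using K R by simp
      ultimately show ?thesis by linarith
    qed
    moreover have "9/4 * (K - 1) * (25/3 * R) = 75/4 * R * (K - 1)" by (simp add: algebra_simps)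
    moreover have "R * (K - 1) \<ge> 0" using R K by simp
    ultimately show ?thesis by linarith
  qed
  have P0: "Av * ((K - 2)^2 * (15 * R - 20) + 6 * (K - 1) * (R - 9)) \<ge> Av * (5 * R * (K - 1))"
    using B Av by (intro mult_left_mono) auto
  have P1: "Av * (5 * R * (K - 1)) - 15 * R * (K - 1) - 15 * R * (R - 2) - 27/2 > 0"
  proof -
    have "5 * R * (K - 1) * (Av - 3) \<ge> 5 * R * 4 * (Av - 3)"
      using K R Av by (intro mult_right_mono) auto
    moreover have "5 * R * 4 * (Av - 3) \<ge> 5 * R * (3 * R - 5)" using Av R by simp
    moreover have "Av * (5 * R * (K - 1)) - 15 * R * (K - 1) = 5 * R * (K - 1) * (Av - 3)" by (simp add: algebra_simps)
    moreover have "5 * R * (3 * R - 5) = 15 * R * (R - 2) + 5 * R" by (simp add: algebra_simps)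
    ultimately show ?thesis using R by linarith
  qed
  have P: "J * (R - 9) + Fv * (5 * R - 20/3) - 5 * R * (K - 1) - 5 * R * (R - 2) - 9/2 > 0"
  proof -
    have "3 * (J * (R - 9) + Fv * (5 * R - 20/3) - 5 * R * (K - 1) - 5 * R * (R - 2) - 9/2)
        = Av * ((K - 2)^2 * (15 * R - 20) + 6 * (K - 1) * (R - 9)) - 15 * R * (K - 1) - 15 * R * (R - 2) - 27/2"
      unfolding J F by (simp add: algebra_simps)
    moreover have "Av * ((K - 2)^2 * (15 * R - 20) + 6 * (K - 1) * (R - 9)) - 15 * R * (K - 1) - 15 * R * (R - 2) - 27/2 > 0"
      using P0 P1 by linarith
    ultimately show ?thesis by (smt (verit))
  qed
  have PL: "L * (J * (R - 9) + Fv * (5 * R - 20/3) - 5 * R * (K - 1) - 5 * R * (R - 2) - 9/2) > 0"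
    using P L by simp
  have l2': "9 * l2 \<le> 9/2 * L" using l2 by simp
  show ?thesis using T1 T2a T2b T3 PL l2' by (simp add: algebra_simps)
qed

lemma keyA:
  fixes K Av L l2 lk1 lk2 :: real
  assumes K: "K \<ge> 8" and L: "L > 0" and l2: "l2 \<le> L / 3"
    and lk1: "2 * l2 + lk1 \<ge> 1 + L" and lk2: "2 * lk2 \<ge> 2 * L - 2 * ln (4/3)"
    and c: "1 + 2 * ln (4/3) \<le> 5/6 * L"
    and J: "J = 2 * (K - 1)" and F: "Fv = (K - 2)^2"
  shows "8 * J * 2 * L + 5 * 2 * (K - 1) * L + 5 * 2 * l2
     < 9 * (J - 1) * l2 + 9 * (J * (l2 + lk1 + (2 - 2) * L) - J) + 5 * (Fv * (2 * lk2 + (2 - 2) * L) - Fv)"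
proof -
  have J0: "J \<ge> 0" and F0: "Fv \<ge> 0" using J F K by auto
  have T1: "9 * J * (2 * l2 + lk1) \<ge> 9 * J * (1 + L)" using lk1 J0 by (intro mult_left_mono) auto
  have T2a: "5 * Fv * (2 * lk2) \<ge> 5 * Fv * (2 * L - 2 * ln (4/3))" using lk2 F0 by (intro mult_left_mono) auto
  have T2b: "5 * Fv * (1 + 2 * ln (4/3)) \<le> 5 * Fv * (5/6 * L)" using c F0 by (intro mult_left_mono) auto
  have P: "35 * (K - 2)^2 - 144 * (K - 1) - 38 > 0"
  proof -
    have "(K - 2) * (K - 2) \<ge> 6 * (K - 2)" using K by (intro mult_right_mono) auto
    then have q: "(K - 2)^2 \<ge> 6 * (K - 2)" by (simp add: power2_eq_square)
    define q where "q = (K - 2)^2"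
    have "q \<ge> 6 * K - 12" using q unfolding q_def by simp
    then have "35 * q - 144 * (K - 1) - 38 > 0" using K by (simp add: algebra_simps)
    then show ?thesis unfolding q_def .
  qed
  have PL: "L * (35 * (K - 2)^2 - 144 * (K - 1) - 38) > 0" using P L by simp
  show ?thesis using T1 T2a T2b PL l2 unfolding J F by (simp add: algebra_simps)
qed

lemma r_le_pow: "r \<ge> 3 \<Longrightarrow> r \<le> (5::nat) ^ (r - 2)"
proof (induction r rule: nat_induct_at_least)
  case base then show ?case by simp
next
  case (Suc n)
  have "Suc n - 2 = Suc (n - 2)" using Suc by auto
  then have "(5::nat) ^ (Suc n - 2) = 5 * 5 ^ (n - 2)" by simp
  then show ?case using Suc by simp
qed

lemma ln3_ge1: "1 \<le> ln (3::real)"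
  using exp_le by (subst ln_ge_iff) auto

lemma numeric_general:
  fixes k r :: nat
  assumes k: "k \<ge> 5" and r: "r \<ge> 2" and nc: "\<not> (r = 2 \<and> k \<le> 7)"
  defines "j \<equiv> 2 * (k - 1) * k ^ (r - 2)" and "f \<equiv> (k - 2)^2 * k ^ (r - 2)" and "m \<equiv> k ^ r"
  shows "fact m ^ 4 * (fact k ^ r * fact r) ^ 5 < (2 ^ (j - 1) * fact j * fact f :: nat) ^ 9"
proof -
  define a where "a = k ^ (r - 2)"
  have jdef: "j = 2 * (k - 1) * a" and fdef: "f = (k - 2)^2 * a" by (simp_all add: j_def f_def a_def)
  define k0 where "k0 = k - 2"
  have k0: "k = k0 + 2" using k by (simp add: k0_def)
  have a1: "a \<ge> 1" using k by (simp add: a_def)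
  have mf: "m = f + 2 * j"
  proof -
    have e: "2 + (r - 2) = r" using r by simp
    have "k ^ r = k^2 * a" unfolding a_def by (metis e power_add)
    moreover have "(k - 2)^2 + 4 * (k - 1) = k^2" unfolding k0 by (simp add: power2_eq_square algebra_simps)
    ultimately show ?thesis unfolding m_def fdef jdef by (metis add_mult_distrib mult.assoc mult.commute numeral_Bit0 one_add_one mult_2)
  qed
  define K where "K = real k"
  define R where "R = real r"
  define Av where "Av = real a"
  define J where "J = real j"
  define Fv where "Fv = real f"
  define L where "L = ln K"
  have K5: "K \<ge> 5" using k by (simp add: K_def)
  have Lpos: "L > 0" using K5 by (simp add: L_def)
  have Av1: "Av \<ge> 1" using a1 by (simp add: Av_def)
  have JJ: "J = 2 * (K - 1) * Av" using k by (simp add: J_def jdef K_def Av_def of_nat_diff)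
  have FF: "Fv = (K - 2)^2 * Av" using k by (simp add: Fv_def fdef K_def Av_def of_nat_diff)
  have j1: "j \<ge> 1" and f1: "f \<ge> 1" using k a1 by (auto simp: jdef fdef)
  have la: "ln Av = (R - 2) * L" using r k by (simp add: Av_def a_def ln_realpow R_def L_def K_def of_nat_diff)
  have lj: "ln J = ln 2 + ln (K - 1) + (R - 2) * L"
  proof -
    have "ln J = ln (2 * (K - 1)) + ln Av" unfolding JJ using K5 Av1 by (intro ln_mult_pos) auto
    moreover have "ln (2 * (K - 1)) = ln 2 + ln (K - 1)" using K5 by (intro ln_mult_pos) auto
    ultimately show ?thesis using la by simp
  qed
  have lf: "ln Fv = 2 * ln (K - 2) + (R - 2) * L"
  proof -
    have "ln Fv = ln ((K - 2)^2) + ln Av" unfolding FF using K5 Av1 by (intro ln_mult_pos) auto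
    moreover have "ln ((K - 2)^2) = 2 * ln (K - 2)" using K5 by (simp add: ln_realpow)
    ultimately show ?thesis using la by simp
  qed
  have lm: "ln (real m) = R * L" using k by (simp add: m_def ln_realpow R_def L_def K_def)
  have b1: "ln (fact m :: real) \<le> ln (fact f) + 2 * J * (R * L)"
  proof -
    have "fact m \<le> fact f * m ^ (2 * j)" using fact_add_le[of f "2 * j"] mf by simp
    then have "real (fact m) \<le> real (fact f * m ^ (2 * j))" by (rule of_nat_mono)
    then have "(fact m :: real) \<le> fact f * real m ^ (2 * j)" by simp
    then have "ln (fact m :: real) \<le> ln (fact f * real m ^ (2 * j))" using k by (subst ln_le_cancel_iff) (auto simp: m_def)
    also have "\<dots> = ln (fact f) + 2 * J * ln (real m)" using k by (simp add: ln_mult ln_realpow m_def J_def)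
    finally show ?thesis using lm by simp
  qed
  have b2: "ln (fact k :: real) \<le> (K - 1) * L"
  proof -
    have "fact k \<le> k ^ (k - 1)" using fact_le_pow_pred[of k] k by simp
    then have "real (fact k) \<le> real (k ^ (k - 1))" by (rule of_nat_mono)
    then have "(fact k :: real) \<le> real k ^ (k - 1)" by simp
    then have "ln (fact k :: real) \<le> ln (real k ^ (k - 1))" using k by (subst ln_le_cancel_iff) auto
    then show ?thesis using k by (simp add: ln_realpow L_def K_def of_nat_diff)
  qed
  have b3: "ln (fact r :: real) \<le> R * ln R"
  proof -
    have "(fact r :: real) \<le> real r ^ r" using fact_le_power[of r] by simp
    then have "ln (fact r :: real) \<le> ln (real r ^ r)" using r by (subst ln_le_cancel_iff) auto
    then show ?thesis using r by (simp add: ln_realpow R_def)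
  qed
  have b4: "J * ln J - J \<le> ln (fact j :: real)" using ln_fact_lower[OF j1] by (simp add: J_def)
  have b5: "Fv * ln Fv - Fv \<le> ln (fact f :: real)" using ln_fact_lower[OF f1] by (simp add: Fv_def)
  have lk1: "2 * ln 2 + ln (K - 1) \<ge> 1 + L"
  proof -
    have "ln (3 * K) \<le> ln (4 * (K - 1))" using K5 by (subst ln_le_cancel_iff) auto
    moreover have "ln (4 * (K - 1)) = ln 4 + ln (K - 1)" using K5 by (intro ln_mult_pos) auto
    moreover have "ln (3 * K) = ln 3 + L" using K5 unfolding L_def by (intro ln_mult_pos) auto
    ultimately have "ln 3 + L \<le> ln 4 + ln (K - 1)" by simp
    moreover have "ln (4::real) = 2 * ln 2" using ln_realpow[of 2 2] by simp
    ultimately show ?thesis using ln3_ge1 by (simp add: algebra_simps)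
  qed
  have key: "8 * J * R * L + 5 * R * (K - 1) * L + 5 * R * ln R
     < 9 * (J - 1) * ln 2 + 9 * (J * ln J - J) + 5 * (Fv * ln Fv - Fv)"
  proof (cases "r \<ge> 3")
    case True
    have R3: "R \<ge> 3" using True by (simp add: R_def)
    have "4 * a \<ge> 3 * r + 7"
    proof -
      have "5 ^ (r - 2) \<le> k ^ (r - 2)" using k by (intro power_mono) auto
      then show ?thesis using four_pow_ge[OF True] by (simp add: a_def)
    qed
    then have A4: "4 * Av \<ge> 3 * R + 7" by (simp add: Av_def R_def)
    have lr: "ln R \<le> (R - 2) * L"
    proof -
      have "r \<le> a" using r_le_pow[OF True] power_mono[of 5 k "r - 2"] k by (simp add: a_def)
      then have "ln R \<le> ln Av" using True by (subst ln_le_cancel_iff) (auto simp: R_def Av_def)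
      then show ?thesis using la by simp
    qed
    have l2: "ln 2 \<le> L / 2"
    proof -
      have "ln 4 \<le> L" using K5 unfolding L_def by (subst ln_le_cancel_iff) auto
      moreover have "ln (4::real) = 2 * ln 2" using ln_realpow[of 2 2] by simp
      ultimately show ?thesis by simp
    qed
    have lk2: "2 * ln (K - 2) \<ge> 2 * L - 2 * ln (5/3)"
    proof -
      have "ln K \<le> ln ((K - 2) * (5/3))" using K5 by (subst ln_le_cancel_iff) auto
      moreover have "ln ((K - 2) * (5/3)) = ln (K - 2) + ln (5/3)" using K5 by (intro ln_mult_pos) auto
      ultimately show ?thesis unfolding L_def by simp
    qed
    have c: "1 + 2 * ln (5/3) \<le> 4/3 * L"
    proof -
      have "ln ((25/3) ^ 3) \<le> ln ((5::real) ^ 4)" by (subst ln_le_cancel_iff) (auto simp: power_divide)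
      then have "3 * ln (25/3) \<le> 4 * ln (5::real)" by (subst (asm) (1 2) ln_realpow) auto
      then have "3 * (ln 25 - ln 3) \<le> 4 * ln (5::real)" by (simp add: ln_div)
      moreover have "ln (25::real) = 2 * ln 5" using ln_realpow[of 5 2] by simp
      moreover have "ln (5/3::real) = ln 5 - ln 3" by (simp add: ln_div)
      moreover have "ln 5 \<le> L" using K5 unfolding L_def by (subst ln_le_cancel_iff) auto
      ultimately show ?thesis using ln3_ge1 by (simp add: algebra_simps)
    qed
    show ?thesis using keyB[OF K5 R3 Av1 A4 Lpos lr l2 lk1[simplified] lk2 c JJ FF] lj lf by simp
  next
    case False
    then have r2: "r = 2" using r by simp
    then have k8: "K \<ge> 8" using nc by (simp add: K_def)
    have R2: "R = 2" using r2 by (simp add: R_def)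
    have Av: "Av = 1" using r2 by (simp add: Av_def a_def)
    have l2: "ln 2 \<le> L / 3"
    proof -
      have "ln 8 \<le> L" using k8 unfolding L_def by (subst ln_le_cancel_iff) auto
      moreover have "ln (8::real) = 3 * ln 2" using ln_realpow[of 2 3] by simp
      ultimately show ?thesis by simp
    qed
    have lk2: "2 * ln (K - 2) \<ge> 2 * L - 2 * ln (4/3)"
    proof -
      have "ln K \<le> ln ((K - 2) * (4/3))" using k8 by (subst ln_le_cancel_iff) auto
      moreover have "ln ((K - 2) * (4/3)) = ln (K - 2) + ln (4/3)" using k8 by (intro ln_mult_pos) auto
      ultimately show ?thesis unfolding L_def by simp
    qed
    have c: "1 + 2 * ln (4/3) \<le> 5/6 * L"
    proof -
      have "ln ((16/3) ^ 6) \<le> ln ((8::real) ^ 5)" by (subst ln_le_cancel_iff) (auto simp: power_divide)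
      then have "6 * ln (16/3) \<le> 5 * ln (8::real)" by (subst (asm) (1 2) ln_realpow) auto
      then have "6 * (ln 16 - ln 3) \<le> 5 * ln (8::real)" by (simp add: ln_div)
      moreover have "ln (16::real) = 4 * ln 2" using ln_realpow[of 2 4] by simp
      moreover have "ln (8::real) = 3 * ln 2" using ln_realpow[of 2 3] by simp
      moreover have "ln (4/3::real) = 2 * ln 2 - ln 3" using ln_realpow[of 2 2] by (simp add: ln_div)
      moreover have "ln 8 \<le> L" using k8 unfolding L_def by (subst ln_le_cancel_iff) auto
      ultimately show ?thesis using ln3_ge1 by (simp add: algebra_simps)
    qed
    have JA: "J = 2 * (K - 1)" using JJ Av by simp
    have FA: "Fv = (K - 2)^2" using FF Av by simp
    show ?thesis using keyA[OF k8 Lpos l2 lk1 lk2 c JA FA] lj lf R2 by simp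
  qed
  have pos: "0 < (fact m ^ 4 * (fact k ^ r * fact r) ^ 5 :: real)" by simp
  have "ln (fact m ^ 4 * (fact k ^ r * fact r) ^ 5 :: real) = 4 * ln (fact m) + 5 * (R * ln (fact k) + ln (fact r))"
    by (simp add: ln_mult ln_realpow R_def)
  also have "\<dots> < 9 * ((J - 1) * ln 2 + ln (fact j) + ln (fact f))"
  proof -
    have "5 * (R * ln (fact k :: real)) \<le> 5 * (R * ((K - 1) * L))" using b2 by (simp add: R_def mult_left_mono)
    then show ?thesis using b1 b3 b4 b5 key by (simp add: algebra_simps)
  qed
  also have "\<dots> = ln ((2 ^ (j - 1) * fact j * fact f) ^ 9 :: real)"
    using j1 by (simp add: ln_mult ln_realpow J_def of_nat_diff)
  finally have "ln (fact m ^ 4 * (fact k ^ r * fact r) ^ 5 :: real) < ln ((2 ^ (j - 1) * fact j * fact f) ^ 9 :: real)" .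
  then have "(fact m ^ 4 * (fact k ^ r * fact r) ^ 5 :: real) < (2 ^ (j - 1) * fact j * fact f) ^ 9"
    using pos by (subst (asm) ln_less_cancel_iff) auto
  then have "real (fact m ^ 4 * (fact k ^ r * fact r) ^ 5) < real ((2 ^ (j - 1) * fact j * fact f) ^ 9)"
    by simp
  then show ?thesis by (simp only: of_nat_less_iff)
qed

lemma c52: "fact 25 ^ 4 * (fact 5 ^ 2 * fact 2) ^ 5 < (36 * (2^7 * fact 8 * fact 9 :: nat)) ^ 9"
  by (simp add: fact_numeral)
lemma c62: "fact 36 ^ 4 * (fact 6 ^ 2 * fact 2) ^ 5 < ((2^9 * fact 10 * fact 16 :: nat)) ^ 9"
  by (simp add: fact_numeral)
lemma c72: "fact 49 ^ 4 * (fact 7 ^ 2 * fact 2) ^ 5 < ((2^11 * fact 12 * fact 25 :: nat)) ^ 9"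
  by (simp add: fact_numeral)

definition Tm :: "nat \<Rightarrow> nat \<Rightarrow> (nat \<Rightarrow> nat) \<Rightarrow> (nat \<Rightarrow> nat) \<Rightarrow> (nat \<Rightarrow> nat) \<Rightarrow> (nat \<Rightarrow> nat)" where
  "Tm k r u v \<gamma> = (if \<gamma> \<in> prod_dom k r then \<gamma>(0 := u (\<gamma> 0), 1 := v (\<gamma> 1)) else \<gamma>)"

lemma Tm_in_dom:
  assumes r: "r \<ge> 2" and u: "u permutes {0..<k}" and v: "v permutes {0..<k}" and g: "\<gamma> \<in> prod_dom k r"
  shows "Tm k r u v \<gamma> \<in> prod_dom k r"
proof -
  have "\<gamma> 0 \<in> {0..<k}" "\<gamma> 1 \<in> {0..<k}" using g r by (auto simp: prod_dom_def PiE_def Pi_def)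
  then have "u (\<gamma> 0) \<in> {0..<k}" "v (\<gamma> 1) \<in> {0..<k}" using permutes_in_image[OF u] permutes_in_image[OF v] by auto
  then show ?thesis using g r by (auto simp: Tm_def prod_dom_def PiE_def Pi_def extensional_def)
qed

lemma Tm_comp:
  assumes r: "r \<ge> 2" and u: "u' permutes {0..<k}" and v: "v' permutes {0..<k}"
  shows "Tm k r u v \<circ> Tm k r u' v' = Tm k r (u \<circ> u') (v \<circ> v')"
proof
  fix \<gamma> show "(Tm k r u v \<circ> Tm k r u' v') \<gamma> = Tm k r (u \<circ> u') (v \<circ> v') \<gamma>"
  proof (cases "\<gamma> \<in> prod_dom k r")
    case True
    then have "Tm k r u' v' \<gamma> \<in> prod_dom k r" using Tm_in_dom[OF r u v] by blast
    then show ?thesis using True by (simp add: Tm_def)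
  qed (simp add: Tm_def)
qed

lemma Tm_id: "Tm k r id id = id"
  by (auto simp: Tm_def fun_eq_iff)

lemma Tm_permutes:
  assumes r: "r \<ge> 2" and u: "u permutes {0..<k}" and v: "v permutes {0..<k}"
  shows "Tm k r u v permutes prod_dom k r"
proof -
  have ui: "Hilbert_Choice.inv u permutes {0..<k}" "Hilbert_Choice.inv v permutes {0..<k}"
    using permutes_inv u v by blast+
  have c1: "Tm k r u v \<circ> Tm k r (Hilbert_Choice.inv u) (Hilbert_Choice.inv v) = id"
    using Tm_comp[OF r ui] permutes_inv_o(1)[OF u] permutes_inv_o(1)[OF v] Tm_id by simp
  have c2: "Tm k r (Hilbert_Choice.inv u) (Hilbert_Choice.inv v) \<circ> Tm k r u v = id"
    using Tm_comp[OF r u v] permutes_inv_o(2)[OF u] permutes_inv_o(2)[OF v] Tm_id by simp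
  show ?thesis unfolding permutes_def
  proof (intro conjI allI impI)
    show "Tm k r u v x = x" if "x \<notin> prod_dom k r" for x using that by (simp add: Tm_def)
    show "\<exists>!x. Tm k r u v x = y" for y
      using c1 c2 by (metis comp_apply id_apply)
  qed
qed

lemma Tm_wreath:
  assumes r: "r \<ge> 2" and u: "u permutes {0..<k}" and v: "v permutes {0..<k}"
  shows "Tm k r u v \<in> wreath_prod_action k r"
proof -
  define x where "x i = (if i = 0 then u else if i = 1 then v else id)" for i :: nat
  have "Tm k r u v = (\<lambda>\<gamma>. if \<gamma> \<in> prod_dom k r
                     then restrict (\<lambda>j. x (Hilbert_Choice.inv id j) (\<gamma> (Hilbert_Choice.inv id j))) {0..<r}
                     else \<gamma>)"
  proof
    fix \<gamma> show "Tm k r u v \<gamma> = (if \<gamma> \<in> prod_dom k r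
                     then restrict (\<lambda>j. x (Hilbert_Choice.inv id j) (\<gamma> (Hilbert_Choice.inv id j))) {0..<r}
                     else \<gamma>)"
    proof (cases "\<gamma> \<in> prod_dom k r")
      case True
      then have "\<gamma> j = undefined" if "j \<ge> r" for j using that by (auto simp: prod_dom_def PiE_def extensional_def)
      then show ?thesis using True r by (auto simp: Tm_def x_def fun_eq_iff inv_id)
    qed (simp add: Tm_def)
  qed
  moreover have "\<forall>i<r. x i permutes {0..<k}" using u v by (auto simp: x_def)
  ultimately show ?thesis unfolding wreath_prod_action_def using permutes_id by blast
qed

abbreviation "tau \<equiv> Transposition.transpose (0::nat) 1"

lemma tau_permutes: "k \<ge> 2 \<Longrightarrow> tau permutes {0..<k}"
  by (rule permutes_swap_id) auto

lemma t_invol: "r \<ge> 2 \<Longrightarrow> k \<ge> 2 \<Longrightarrow> Tm k r tau tau (Tm k r tau tau x) = x"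
  using Tm_comp[OF _ tau_permutes tau_permutes, of r k tau tau] Tm_id
  by (metis comp_apply id_apply transpose_comp_involutory)

lemma t_fix:
  assumes r: "r \<ge> 2" and k: "k \<ge> 2"
  shows "{\<gamma> \<in> prod_dom k r. Tm k r tau tau \<gamma> = \<gamma>} = PiE {0..<r} (\<lambda>i. if i < 2 then {2..<k} else {0..<k})"
proof -
  have "Tm k r tau tau \<gamma> = \<gamma> \<longleftrightarrow> \<gamma> 0 \<ge> 2 \<and> \<gamma> 1 \<ge> 2" if "\<gamma> \<in> prod_dom k r" for \<gamma>
  proof -
    have "Tm k r tau tau \<gamma> = \<gamma> \<longleftrightarrow> tau (\<gamma> 0) = \<gamma> 0 \<and> tau (\<gamma> 1) = \<gamma> 1"
      using that by (auto simp: Tm_def fun_eq_iff)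
    also have "\<dots> \<longleftrightarrow> \<gamma> 0 \<ge> 2 \<and> \<gamma> 1 \<ge> 2" by (auto simp: transpose_eq_iff)
    finally show ?thesis .
  qed
  moreover have "x \<in> PiE {0..<r} (\<lambda>i. if i < 2 then {2..<k} else {0..<k}) \<longleftrightarrow> x \<in> prod_dom k r \<and> 2 \<le> x 0 \<and> 2 \<le> x 1" for x
  proof
    assume x: "x \<in> PiE {0..<r} (\<lambda>i. if i < 2 then {2..<k} else {0..<k})"
    then have "x i \<in> {0..<k}" if "i < r" for i using that by (auto simp: PiE_iff split: if_splits)
    moreover have "x \<in> extensional {0..<r}" using x by (simp add: PiE_iff)
    moreover have all: "\<forall>i\<in>{0..<r}. x i \<in> (if i < 2 then {2..<k} else {0..<k})" using x by (simp add: PiE_iff)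
    moreover have "x 0 \<in> {2..<k}" using all[rule_format, of 0] r by simp
    moreover have "x 1 \<in> {2..<k}" using all[rule_format, of 1] r by simp
    ultimately show "x \<in> prod_dom k r \<and> 2 \<le> x 0 \<and> 2 \<le> x 1" by (auto simp: prod_dom_def PiE_iff)
  next
    assume x: "x \<in> prod_dom k r \<and> 2 \<le> x 0 \<and> 2 \<le> x 1"
    have "x i \<in> (if i < 2 then {2..<k} else {0..<k})" if "i \<in> {0..<r}" for i
    proof (cases "i < 2")
      case True then have "i = 0 \<or> i = 1" by auto
      then show ?thesis using x that by (auto simp: prod_dom_def PiE_iff)
    next
      case False then show ?thesis using x that by (auto simp: prod_dom_def PiE_iff)
    qed
    then show "x \<in> PiE {0..<r} (\<lambda>i. if i < 2 then {2..<k} else {0..<k})"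
      using x by (auto simp: prod_dom_def PiE_iff)
  qed
  ultimately show ?thesis by blast
qed

lemma card_fix:
  assumes r: "r \<ge> 2"
  shows "card (PiE {0..<r} (\<lambda>i. if i < 2 then {2..<k} else {0..<k})) = (k - 2)^2 * k ^ (r - 2)"
proof -
  have "card (PiE {0..<r} (\<lambda>i. if i < 2 then {2..<k} else {0..<k})) = (\<Prod>i\<in>{0..<r}. card (if i < 2 then {2..<k} else {0..<k}))"
    by (simp add: card_PiE)
  also have "\<dots> = (\<Prod>i\<in>{0::nat, 1}. card (if i < 2 then {2..<k} else {0..<k})) * (\<Prod>i\<in>{2..<r}. card (if i < 2 then {2..<k} else {0..<k}))"
  proof -
    have eq: "{0..<r} = {0::nat, 1} \<union> {2..<r}" using r by auto
    show ?thesis by (subst eq, rule prod.union_disjoint) auto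
  qed
  also have "(\<Prod>i\<in>{2..<r}. card (if i < 2 then {2..<k} else {0..<k})) = (\<Prod>i\<in>{2..<r}. k)"
    by (rule prod.cong) auto
  finally show ?thesis by (simp add: power2_eq_square)
qed

lemma t_main:
  assumes k: "k \<ge> 5" and r: "r \<ge> 2"
  defines "t \<equiv> Tm k r tau tau" and "\<Omega> \<equiv> prod_dom k r"
  shows "evenperm t" and "t \<noteq> id"
    and "2 ^ (2 * (k - 1) * k ^ (r - 2) - 1) * fact (2 * (k - 1) * k ^ (r - 2)) * fact ((k - 2)^2 * k ^ (r - 2))
           \<le> card {c. c permutes \<Omega> \<and> evenperm c \<and> c \<circ> t = t \<circ> c}"
    and "\<exists>w. w permutes \<Omega> \<and> \<not> evenperm w \<and> w \<circ> t = t \<circ> w"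
proof -
  define a where "a = k ^ (r - 2)"
  define M where "M = {x \<in> \<Omega>. t x \<noteq> x}"
  define F where "F = {x \<in> \<Omega>. t x = x}"
  have k2: "k \<ge> 2" using k by simp
  have tp: "t permutes \<Omega>" unfolding t_def \<Omega>_def using Tm_permutes[OF r tau_permutes[OF k2] tau_permutes[OF k2]] .
  have ti: "t (t x) = x" for x unfolding t_def using t_invol[OF r k2] .
  have fin: "finite \<Omega>" unfolding \<Omega>_def by (rule finite_prod_dom)
  have cF: "card F = (k - 2)^2 * a" unfolding F_def t_def \<Omega>_def a_def using t_fix[OF r k2] card_fix[OF r] by simp
  have cO: "card \<Omega> = k^2 * a"
  proof -
    have e: "2 + (r - 2) = r" using r by simp
    show ?thesis unfolding \<Omega>_def card_prod_dom a_def by (metis e power_add)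
  qed
  have MF: "M = \<Omega> - F" "F \<subseteq> \<Omega>" by (auto simp: M_def F_def)
  have cM: "card M = 2 * (2 * (k - 1) * a)"
  proof -
    have "card M = card \<Omega> - card F" using MF fin by (simp add: card_Diff_subset finite_subset)
    also have "\<dots> = (k^2 - (k - 2)^2) * a" using cO cF by (simp add: diff_mult_distrib)
    also have "k^2 - (k - 2)^2 = 4 * (k - 1)"
    proof -
      obtain k0 where "k = k0 + 2" using k2 by (metis add.commute le_add_diff_inverse)
      then show ?thesis by (simp add: power2_eq_square algebra_simps)
    qed
    finally show ?thesis by simp
  qed
  have Mt: "x \<in> M \<Longrightarrow> t x \<in> M" for x
    using permutes_in_image[OF tp] ti unfolding M_def by (metis (mono_tags, lifting) mem_Collect_eq)
  have finM: "finite M" using fin unfolding M_def by simp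
  have Mn: "x \<in> M \<Longrightarrow> t x \<noteq> x" for x by (simp add: M_def)
  obtain A where A: "A \<subseteq> M" "A \<inter> t ` A = {}" "A \<union> t ` A = M"
    using transversal_exists[of M t, OF finM ti Mt Mn] by blast
  have finA: "finite A" using finite_subset[OF A(1) finM] .
  have cA: "card A = 2 * (k - 1) * a"
  proof -
    have "inj_on t A" using ti by (metis inj_on_inverseI)
    then have "card (t ` A) = card A" by (rule card_image)
    then have "card M = 2 * card A" using A(2,3) finA by (metis card_Un_disjoint finite_imageI mult_2)
    then show ?thesis using cM by (simp add: ac_simps)
  qed
  have supp: "{x. t x \<noteq> x} = A \<union> t ` A"
    using A(3) permutes_not_in[OF tp] unfolding M_def by auto
  from invol_evenperm[OF finA ti A(2) supp] have pt: "permutation t" and et: "evenperm t \<longleftrightarrow> even (card A)" by auto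
  show "evenperm t" using et cA by simp
  have "A \<noteq> {}" using cA k by (auto simp: a_def)
  then obtain a0 where a0: "a0 \<in> A" by blast
  have a0M: "a0 \<in> M" "t a0 \<in> M" using a0 A Mt by auto
  then have ta0: "t a0 \<noteq> a0" by (simp add: M_def)
  then show "t \<noteq> id" by auto
  define w where "w = Transposition.transpose a0 (t a0)"
  have wp: "w permutes \<Omega>" unfolding w_def using a0M by (intro permutes_swap_id) (auto simp: M_def)
  have wc: "w \<circ> t = t \<circ> w"
  proof
    fix x show "(w \<circ> t) x = (t \<circ> w) x"
      unfolding w_def using ti by (simp add: transpose_def) (metis)
  qed
  have wo: "\<not> evenperm w" using ta0 by (simp add: w_def evenperm_swap)
  show "\<exists>w. w permutes \<Omega> \<and> \<not> evenperm w \<and> w \<circ> t = t \<circ> w" using wp wo wc by blast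
  define C where "C = {c. c permutes \<Omega> \<and> c \<circ> t = t \<circ> c}"
  have Ccard: "2 ^ card A * fact (card A) * fact (card F) \<le> card C"
    unfolding C_def F_def using centralizer_card[OF fin tp ti A(2)] A(3) by (simp add: M_def)
  have finC: "finite C" unfolding C_def using finite_permutations[OF fin] by (rule finite_subset[rotated]) auto
  have half: "card C \<le> 2 * card {c\<in>C. evenperm c}"
  proof (rule even_half[OF finC])
    show "w \<in> C" using wp wc by (simp add: C_def)
    show "permutation w" by (simp add: w_def permutation_swap_id)
    show "\<not> evenperm w" by fact
    show "w \<circ> c \<in> C" if "c \<in> C" for c
      using that wp wc by (auto simp: C_def permutes_compose) (metis comp_assoc)
    show "permutation c" if "c \<in> C" for c using that fin permutation_permutes by (auto simp: C_def)
  qed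
  have "{c\<in>C. evenperm c} = {c. c permutes \<Omega> \<and> evenperm c \<and> c \<circ> t = t \<circ> c}" by (auto simp: C_def)
  moreover have "card A \<ge> 1" using cA k by (simp add: a_def)
  ultimately show "2 ^ (2 * (k - 1) * k ^ (r - 2) - 1) * fact (2 * (k - 1) * k ^ (r - 2)) * fact ((k - 2)^2 * k ^ (r - 2))
           \<le> card {c. c permutes \<Omega> \<and> evenperm c \<and> c \<circ> t = t \<circ> c}"
  proof -
    let ?n = "card A" and ?E = "card {c. c permutes \<Omega> \<and> evenperm c \<and> c \<circ> t = t \<circ> c}"
    have p: "(2::nat) ^ ?n = 2 * 2 ^ (?n - 1)" using \<open>card A \<ge> 1\<close> by (cases "card A") auto
    have "2 * (2 ^ (?n - 1) * fact ?n * fact (card F)) \<le> 2 * ?E"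
      using Ccard half p \<open>{c\<in>C. evenperm c} = _\<close> by (simp add: mult.assoc)
    then have "2 ^ (?n - 1) * fact ?n * fact (card F) \<le> ?E" by simp
    then show ?thesis using cA cF unfolding a_def by simp
  qed
qed

lemma G_facts:
  assumes G: "G = Sym_grp S \<or> G = Alt_grp S" and fin: "finite S"
  shows "group G" "carrier G \<subseteq> {p. p permutes S}" "\<one>\<^bsub>G\<^esub> = id" "\<And>x y. x \<otimes>\<^bsub>G\<^esub> y = x \<circ> y"
    "\<And>x. x \<in> carrier G \<Longrightarrow> inv\<^bsub>G\<^esub> x = Hilbert_Choice.inv x"
    "\<And>x. x permutes S \<Longrightarrow> evenperm x \<Longrightarrow> x \<in> carrier G"
    "finite (carrier G)" "order G \<le> fact (card S)"
proof -
  show grp: "group G" using G Sym_group Alt_group fin by blast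
  show sub: "carrier G \<subseteq> {p. p permutes S}" using G by (auto simp: Sym_grp_def Alt_grp_def)
  show one: "\<one>\<^bsub>G\<^esub> = id" using G by (auto simp: Sym_grp_def Alt_grp_def)
  show mult: "x \<otimes>\<^bsub>G\<^esub> y = x \<circ> y" for x y using G by (auto simp: Sym_grp_def Alt_grp_def)
  show inC: "x \<in> carrier G" if "x permutes S" "evenperm x" for x using G that by (auto simp: Sym_grp_def Alt_grp_def)
  show "inv\<^bsub>G\<^esub> x = Hilbert_Choice.inv x" if x: "x \<in> carrier G" for x
  proof -
    have xp: "x permutes S" using x sub by auto
    have "permutation x" using xp fin permutation_permutes by blast
    have ix: "Hilbert_Choice.inv x \<in> carrier G"
    proof (cases "G = Sym_grp S")
      case True then show ?thesis using permutes_inv[OF xp] by (simp add: Sym_grp_def)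
    next
      case False then have "G = Alt_grp S" using G by blast
      then show ?thesis using permutes_inv[OF xp] x evenperm_inv[OF \<open>permutation x\<close>] by (simp add: Alt_grp_def)
    qed
    show ?thesis
      using group.inv_equality[OF grp _ x ix] permutes_inv_o(2)[OF xp] one mult by simp
  qed
  show "finite (carrier G)" using finite_permutations[OF fin] sub finite_subset by blast
  then show "order G \<le> fact (card S)"
    unfolding order_def using card_mono[OF finite_permutations[OF fin] sub] card_permutations[OF refl fin] by simp
qed

lemma Tm_inv:
  assumes r: "r \<ge> 2" and a: "a permutes {0..<k}" and b: "b permutes {0..<k}"
  shows "Hilbert_Choice.inv (Tm k r a b) = Tm k r (Hilbert_Choice.inv a) (Hilbert_Choice.inv b)"
proof (rule inv_unique_comp)
  have ui: "Hilbert_Choice.inv a permutes {0..<k}" "Hilbert_Choice.inv b permutes {0..<k}"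
    using permutes_inv a b by blast+
  show "Tm k r a b \<circ> Tm k r (Hilbert_Choice.inv a) (Hilbert_Choice.inv b) = id"
    using Tm_comp[OF r ui] permutes_inv_o(1)[OF a] permutes_inv_o(1)[OF b] Tm_id by simp
  show "Tm k r (Hilbert_Choice.inv a) (Hilbert_Choice.inv b) \<circ> Tm k r a b = id"
    using Tm_comp[OF r a b] permutes_inv_o(2)[OF a] permutes_inv_o(2)[OF b] Tm_id by simp
qed

lemma tau_conj:
  assumes a: "a permutes {0..<k}"
  shows "a \<circ> tau \<circ> Hilbert_Choice.inv a = Transposition.transpose (a 0) (a 1)"
proof -
  have bij: "bij a" using permutes_bij[OF a] .
  have "Transposition.transpose (a 0) (a 1) \<circ> a = a \<circ> tau"
    using transpose_comp_eq[OF bij, of "a 0" "a 1"] permutes_inverses(2)[OF a] by simp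
  then have "Transposition.transpose (a 0) (a 1) \<circ> a \<circ> Hilbert_Choice.inv a = a \<circ> tau \<circ> Hilbert_Choice.inv a" by simp
  then show ?thesis using permutes_inv_o(1)[OF a] by (simp add: o_assoc[symmetric])
qed

lemma tr_inj:
  assumes "p1 \<in> {0,1}" "p2 \<in> {0,1}" "q1 \<in> {2,3,4}" "q2 \<in> {2,3,4::nat}"
    and h: "\<forall>c<5. Transposition.transpose p1 q1 c = Transposition.transpose p2 q2 c"
  shows "p1 = p2 \<and> q1 = q2"
  using h[rule_format, of p1] h[rule_format, of p2] assms(1-4) by (auto simp: transpose_def)

lemma S52:
  assumes G: "G = Sym_grp (prod_dom 5 2) \<or> G = Alt_grp (prod_dom 5 2)"
  shows "\<exists>S. S \<subseteq> wreath_prod_action 5 2 \<inter> carrier G \<and> card S = 36 \<and>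
           (\<forall>s\<in>S. \<exists>x\<in>carrier G. x \<otimes>\<^bsub>G\<^esub> Tm 5 2 tau tau \<otimes>\<^bsub>G\<^esub> inv\<^bsub>G\<^esub> x = s)"
proof -
  define \<Omega> where "\<Omega> = prod_dom 5 2"
  define t where "t = Tm 5 2 tau tau"
  have fin: "finite \<Omega>" unfolding \<Omega>_def by (rule finite_prod_dom)
  note GF = G_facts[OF G[folded \<Omega>_def] fin]
  have te: "evenperm t" using t_main(1)[of 5 2] by (simp add: t_def)
  obtain w where w: "w permutes \<Omega>" "\<not> evenperm w" "w \<circ> t = t \<circ> w"
    using t_main(4)[of 5 2] by (auto simp: t_def \<Omega>_def)
  have tp: "t permutes \<Omega>" unfolding t_def \<Omega>_def by (rule Tm_permutes) (auto intro: tau_permutes[of 5, simplified])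
  have tG: "t \<in> carrier G" using GF(6)[OF tp te] .
  define \<alpha> where "\<alpha> p q = (if p = 0 then Transposition.transpose 1 q else tau \<circ> Transposition.transpose 1 q)" for p q :: nat
  have \<alpha>: "\<alpha> p q permutes {0..<5} \<and> \<alpha> p q 0 = p \<and> \<alpha> p q 1 = q" if "p \<in> {0,1}" "q \<in> {2,3,4}" for p q
    using that by (auto simp: \<alpha>_def intro!: permutes_compose permutes_swap_id)
  define P :: "(nat \<times> nat) set" where "P = {0,1} \<times> {2,3,4}"
  define \<phi> where "\<phi> = (\<lambda>((p,q),(p',q')). Tm 5 2 (Transposition.transpose p q) (Transposition.transpose p' q'))"
  have trp: "Transposition.transpose p q permutes {0..<5}" if "(p, q) \<in> P" for p q
    using that by (intro permutes_swap_id) (auto simp: P_def)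
  have conj: "\<exists>x\<in>carrier G. x \<otimes>\<^bsub>G\<^esub> t \<otimes>\<^bsub>G\<^esub> inv\<^bsub>G\<^esub> x = \<phi> e" if e: "e \<in> P \<times> P" for e
  proof -
    obtain p q p' q' where e': "e = ((p,q),(p',q'))" by (metis prod.exhaust)
    have pq: "p \<in> {0,1}" "q \<in> {2,3,4}" "p' \<in> {0,1}" "q' \<in> {2,3,4}" using e e' by (auto simp: P_def)
    define A where "A = \<alpha> p q"
    define B where "B = \<alpha> p' q'"
    have A: "A permutes {0..<5}" "A 0 = p" "A 1 = q" using \<alpha>[OF pq(1,2)] by (auto simp: A_def)
    have B: "B permutes {0..<5}" "B 0 = p'" "B 1 = q'" using \<alpha>[OF pq(3,4)] by (auto simp: B_def)
    define X where "X = Tm 5 2 A B"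
    have Xp: "X permutes \<Omega>" unfolding X_def \<Omega>_def using Tm_permutes A(1) B(1) by simp
    have tau5: "tau permutes {0..<5}" by (rule tau_permutes) simp
    have iA: "Hilbert_Choice.inv A permutes {0..<5}" "Hilbert_Choice.inv B permutes {0..<5}"
      using permutes_inv A(1) B(1) by blast+
    have "X \<circ> t \<circ> Hilbert_Choice.inv X = Tm 5 2 (A \<circ> tau \<circ> Hilbert_Choice.inv A) (B \<circ> tau \<circ> Hilbert_Choice.inv B)"
      unfolding X_def t_def Tm_inv[of 2 A 5 B, OF _ A(1) B(1), simplified]
      using Tm_comp[of 2 tau 5 tau A B, OF _ tau5 tau5] Tm_comp[of 2 "Hilbert_Choice.inv A" 5 "Hilbert_Choice.inv B" "A \<circ> tau" "B \<circ> tau", OF _ iA]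
      by simp
    also have "\<dots> = \<phi> e" using tau_conj[OF A(1)] tau_conj[OF B(1)] A B by (simp add: \<phi>_def e')
    finally have Xc: "X \<circ> t \<circ> Hilbert_Choice.inv X = \<phi> e" .
    define x where "x = (if evenperm X then X else X \<circ> w)"
    have permX: "permutation X" "permutation w" using Xp w(1) fin permutation_permutes by blast+
    have xp: "x permutes \<Omega>" using Xp w(1) by (simp add: x_def permutes_compose)
    have xe: "evenperm x" using w(2) by (simp add: x_def evenperm_comp[OF permX])
    have xc: "x \<circ> t \<circ> Hilbert_Choice.inv x = \<phi> e"
    proof (cases "evenperm X")
      case True then show ?thesis using Xc by (simp add: x_def)
    next
      case False
      have bX: "bij X" "bij w" using permutes_bij Xp w(1) by blast+
      have ixw: "Hilbert_Choice.inv (X \<circ> w) = Hilbert_Choice.inv w \<circ> Hilbert_Choice.inv X"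
        using o_inv_distrib[OF bX(1) bX(2)] by simp
      have wt: "w \<circ> t \<circ> Hilbert_Choice.inv w = t"
        using w(3) permutes_inv_o(1)[OF w(1)] by (metis comp_assoc comp_id)
      have "(X \<circ> w) \<circ> t \<circ> Hilbert_Choice.inv (X \<circ> w) = X \<circ> (w \<circ> t \<circ> Hilbert_Choice.inv w) \<circ> Hilbert_Choice.inv X"
        using ixw by (simp add: o_assoc)
      then have "(X \<circ> w) \<circ> t \<circ> Hilbert_Choice.inv (X \<circ> w) = X \<circ> t \<circ> Hilbert_Choice.inv X"
        by (simp only: wt)
      then show ?thesis using Xc False by (simp add: x_def)
    qed
    have xG: "x \<in> carrier G" using GF(6)[OF xp xe] .
    have "x \<otimes>\<^bsub>G\<^esub> t \<otimes>\<^bsub>G\<^esub> inv\<^bsub>G\<^esub> x = \<phi> e" using xc GF(4) GF(5)[OF xG] by simp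
    then show ?thesis using xG by blast
  qed
  have inS: "\<phi> e \<in> wreath_prod_action 5 2 \<inter> carrier G" if e: "e \<in> P \<times> P" for e
  proof -
    obtain p q p' q' where e': "e = ((p,q),(p',q'))" by (metis prod.exhaust)
    have "\<phi> e \<in> wreath_prod_action 5 2" unfolding e' \<phi>_def
      using Tm_wreath trp e e' by auto
    moreover obtain x where "x \<in> carrier G" "x \<otimes>\<^bsub>G\<^esub> t \<otimes>\<^bsub>G\<^esub> inv\<^bsub>G\<^esub> x = \<phi> e" using conj[OF e] by blast
    then have "\<phi> e \<in> carrier G" using tG group.subgroup_self[OF GF(1)]
      by (metis GF(1) group.inv_closed monoid.m_closed group.is_monoid)
    ultimately show ?thesis by blast
  qed
  define pt where "pt c d = restrict (\<lambda>i::nat. if i = 0 then c else d) {0..<2}" for c d :: nat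
  have ptO: "pt c d \<in> \<Omega>" if "c < 5" "d < 5" for c d
    using that by (auto simp: pt_def \<Omega>_def prod_dom_def PiE_iff)
  have ev: "Tm 5 2 u v (pt c d) 0 = u c \<and> Tm 5 2 u v (pt c d) 1 = v d" if "c < 5" "d < 5" for u v c d
    using ptO[OF that] by (simp add: Tm_def \<Omega>_def pt_def)
  have inj: "inj_on \<phi> (P \<times> P)"
  proof (rule inj_onI)
    fix e1 e2 assume e1: "e1 \<in> P \<times> P" and e2: "e2 \<in> P \<times> P" and eq: "\<phi> e1 = \<phi> e2"
    obtain p1 q1 p1' q1' where e1': "e1 = ((p1,q1),(p1',q1'))" by (metis prod.exhaust)
    obtain p2 q2 p2' q2' where e2': "e2 = ((p2,q2),(p2',q2'))" by (metis prod.exhaust)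
    have h1: "\<forall>c<5. Transposition.transpose p1 q1 c = Transposition.transpose p2 q2 c"
      using eq ev by (auto simp: \<phi>_def e1' e2') (metis ev zero_less_numeral)
    have h2: "\<forall>d<5. Transposition.transpose p1' q1' d = Transposition.transpose p2' q2' d"
      using eq ev by (auto simp: \<phi>_def e1' e2') (metis ev zero_less_numeral)
    have m1: "p1 \<in> {0,1}" "q1 \<in> {2,3,4}" "p1' \<in> {0,1}" "q1' \<in> {2,3,4}" using e1 by (auto simp: e1' P_def)
    have m2: "p2 \<in> {0,1}" "q2 \<in> {2,3,4}" "p2' \<in> {0,1}" "q2' \<in> {2,3,4}" using e2 by (auto simp: e2' P_def)
    have "p1 = p2 \<and> q1 = q2" by (rule tr_inj[OF m1(1) m2(1) m1(2) m2(2) h1])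
    moreover have "p1' = p2' \<and> q1' = q2'" by (rule tr_inj[OF m1(3) m2(3) m1(4) m2(4) h2])
    ultimately show "e1 = e2" by (simp add: e1' e2')
  qed
  have "card (P \<times> P) = 36" by (simp add: P_def card_cartesian_product)
  then have "card (\<phi> ` (P \<times> P)) = 36" using card_image[OF inj] by simp
  then show ?thesis using inS conj unfolding t_def by (intro exI[of _ "\<phi> ` (P \<times> P)"]) auto
qed

theorem proposition2p11:
  fixes k r :: nat and G :: "((nat \<Rightarrow> nat) \<Rightarrow> (nat \<Rightarrow> nat)) monoid"
  assumes "k \<ge> 5" and "r \<ge> 2"
    and "G = Sym_grp (prod_dom k r) \<or> G = Alt_grp (prod_dom k r)"
    and "maximal_subgroup (wreath_prod_action k r \<inter> carrier G) G"
  shows "real (ifix G (wreath_prod_action k r \<inter> carrier G) (carrier (Alt_grp (prod_dom k r))))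
           > real (card (rcosets\<^bsub>G\<^esub> (wreath_prod_action k r \<inter> carrier G))) powr (4/9)"
proof -
  note k = assms(1) and r = assms(2)
  define \<Omega> where "\<Omega> = prod_dom k r"
  define H where "H = wreath_prod_action k r \<inter> carrier G"
  define t where "t = Tm k r tau tau"
  have fin: "finite \<Omega>" unfolding \<Omega>_def by (rule finite_prod_dom)
  note GF = G_facts[OF assms(3)[folded \<Omega>_def] fin]
  interpret group G by (rule GF(1))
  have HG: "subgroup H G" using assms(4) by (simp add: maximal_subgroup_def H_def)
  have k2: "k \<ge> 2" using k by simp
  have tp: "t permutes \<Omega>" unfolding t_def \<Omega>_def using Tm_permutes[OF r tau_permutes[OF k2] tau_permutes[OF k2]] .
  have te: "evenperm t" using t_main(1)[OF k r] by (simp add: t_def)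
  have tG: "t \<in> carrier G" using GF(6)[OF tp te] .
  have tA: "t \<in> carrier (Alt_grp (prod_dom k r))" using tp te by (simp add: Alt_grp_def \<Omega>_def)
  have tH: "t \<in> H" using Tm_wreath[OF r tau_permutes[OF k2] tau_permutes[OF k2]] tG by (simp add: H_def t_def)
  have t1: "t \<noteq> \<one>\<^bsub>G\<^esub>" using t_main(2)[OF k r] GF(3) by (simp add: t_def)
  have tt: "t \<otimes>\<^bsub>G\<^esub> t = \<one>\<^bsub>G\<^esub>" using t_invol[OF r k2] GF(3) GF(4) by (simp add: t_def fun_eq_iff)
  define j where "j = 2 * (k - 1) * k ^ (r - 2)"
  define f where "f = (k - 2)^2 * k ^ (r - 2)"
  define c0 :: nat where "c0 = 2 ^ (j - 1) * fact j * fact f"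
  define Cen where "Cen = {x \<in> carrier G. x \<otimes>\<^bsub>G\<^esub> t = t \<otimes>\<^bsub>G\<^esub> x}"
  have finG: "finite (carrier G)" by (rule GF(7))
  have c0Cen: "c0 \<le> card Cen"
  proof -
    have "{c. c permutes \<Omega> \<and> evenperm c \<and> c \<circ> t = t \<circ> c} \<subseteq> Cen"
      using GF(6) GF(4) by (auto simp: Cen_def)
    moreover have "finite Cen" using finG by (simp add: Cen_def)
    ultimately have "card {c. c permutes \<Omega> \<and> evenperm c \<and> c \<circ> t = t \<circ> c} \<le> card Cen" by (rule card_mono[rotated])
    then show ?thesis using t_main(3)[OF k r] by (simp add: c0_def j_def f_def t_def \<Omega>_def)
  qed
  obtain S where S: "S \<subseteq> H" "\<And>s. s \<in> S \<Longrightarrow> \<exists>x\<in>carrier G. x \<otimes>\<^bsub>G\<^esub> t \<otimes>\<^bsub>G\<^esub> inv\<^bsub>G\<^esub> x = s"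
    and Scard: "(k = 5 \<and> r = 2 \<longrightarrow> card S = 36) \<and> card S \<ge> 1"
  proof (cases "k = 5 \<and> r = 2")
    case True
    then obtain S where "S \<subseteq> wreath_prod_action 5 2 \<inter> carrier G" "card S = 36"
       "\<forall>s\<in>S. \<exists>x\<in>carrier G. x \<otimes>\<^bsub>G\<^esub> Tm 5 2 tau tau \<otimes>\<^bsub>G\<^esub> inv\<^bsub>G\<^esub> x = s"
      using S52[of G] assms(3) by auto
    then show ?thesis using that[of S] True by (auto simp: H_def t_def)
  next
    case False
    have "\<one>\<^bsub>G\<^esub> \<otimes>\<^bsub>G\<^esub> t \<otimes>\<^bsub>G\<^esub> inv\<^bsub>G\<^esub> \<one>\<^bsub>G\<^esub> = t" using tG by simp
    then have "\<exists>x\<in>carrier G. x \<otimes>\<^bsub>G\<^esub> t \<otimes>\<^bsub>G\<^esub> inv\<^bsub>G\<^esub> x = t" using one_closed by blast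
    then show ?thesis using that[of "{t}"] False tH by auto
  qed
  define fx where "fx = card {C \<in> rcosets\<^bsub>G\<^esub> H. C #>\<^bsub>G\<^esub> t = C}"
  have Afact: "card Cen * card S \<le> fx * card H"
    using coset_fix_bound[OF finG HG tG S(1)] S(2) by (simp add: Cen_def fx_def)
  have lag: "card (rcosets\<^bsub>G\<^esub> H) * card H = order G" using lagrange[OF HG] .
  have Hb: "card H \<le> fact k ^ r * fact r"
  proof -
    have "card H \<le> card (wreath_prod_action k r)" using wreath_card[of k r] by (auto simp: H_def intro: card_mono)
    then show ?thesis using wreath_card[of k r] by linarith
  qed
  have Gb: "order G \<le> fact (k ^ r)" using GF(8) by (simp add: \<Omega>_def card_prod_dom)
  have H1: "card H \<ge> 1"
  proof -
    have "finite H" using finG subgroup.subset[OF HG] finite_subset by blast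
    moreover have "\<one>\<^bsub>G\<^esub> \<in> H" using subgroup.one_closed[OF HG] .
    ultimately show ?thesis by (metis One_nat_def Suc_leI card_gt_0_iff empty_iff)
  qed
  have num: "fact (k ^ r) ^ 4 * (fact k ^ r * fact r) ^ 5 < (card S * c0) ^ 9"
  proof (cases "r = 2 \<and> k \<le> 7")
    case True
    then consider "k = 5" | "k = 6" | "k = 7" using k by linarith
    then show ?thesis
    proof cases
      case 1 then show ?thesis using c52 Scard True by (simp add: c0_def j_def f_def)
    next
      case 2
      have "card S * c0 \<ge> c0" using Scard by simp
      then have "c0 ^ 9 \<le> (card S * c0) ^ 9" by (rule power_mono) simp
      moreover have "fact (k ^ r) ^ 4 * (fact k ^ r * fact r) ^ 5 < c0 ^ 9"
        using c62 2 True by (simp add: c0_def j_def f_def)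
      ultimately show ?thesis by linarith
    next
      case 3
      have "card S * c0 \<ge> c0" using Scard by simp
      then have "c0 ^ 9 \<le> (card S * c0) ^ 9" by (rule power_mono) simp
      moreover have "fact (k ^ r) ^ 4 * (fact k ^ r * fact r) ^ 5 < c0 ^ 9"
        using c72 3 True by (simp add: c0_def j_def f_def)
      ultimately show ?thesis by linarith
    qed
  next
    case False
    have "card S * c0 \<ge> c0" using Scard by simp
    then have "c0 ^ 9 \<le> (card S * c0) ^ 9" by (rule power_mono) simp
    moreover have "fact (k ^ r) ^ 4 * (fact k ^ r * fact r) ^ 5 < c0 ^ 9"
      using numeric_general[OF k r False] by (simp add: c0_def j_def f_def)
    ultimately show ?thesis by linarith
  qed
  define n where "n = card (rcosets\<^bsub>G\<^esub> H)"
  define h where "h = card H"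
  have x9: "n ^ 4 < fx ^ 9"
  proof -
    have "(n * h) ^ 4 * h ^ 5 \<le> fact (k ^ r) ^ 4 * (fact k ^ r * fact r) ^ 5"
      using lag Gb Hb by (intro mult_mono power_mono) (auto simp: n_def h_def)
    also have "\<dots> < (card S * c0) ^ 9" by (rule num)
    also have "\<dots> \<le> (card Cen * card S) ^ 9" using c0Cen by (intro power_mono) (auto simp: mult.commute)
    also have "\<dots> \<le> (fx * h) ^ 9" using Afact by (intro power_mono) (auto simp: h_def)
    finally have "n ^ 4 * h ^ 9 < fx ^ 9 * h ^ 9" by (simp add: power_mult_distrib power_add[symmetric] mult.assoc)
    then show ?thesis by simp
  qed
  have ifx: "fx \<le> ifix G H (carrier (Alt_grp (prod_dom k r)))"
  proof -
    let ?V = "{coset_fix G H t' | t'. t' \<in> carrier (Alt_grp (prod_dom k r)) \<and> t' \<noteq> \<one>\<^bsub>G\<^esub> \<and> t' \<otimes>\<^bsub>G\<^esub> t' = \<one>\<^bsub>G\<^esub>}"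
    have finR: "finite (rcosets\<^bsub>G\<^esub> H)"
      using rcosets_subset_PowG[OF HG] finG by (meson finite_Pow_iff finite_subset)
    have "?V \<subseteq> {0..card (rcosets\<^bsub>G\<^esub> H)}"
      using finR by (auto simp: coset_fix_def intro!: card_mono)
    then have "finite ?V" using finite_subset by blast
    moreover have "fx \<in> ?V" using tA t1 tt by (auto simp: fx_def coset_fix_def)
    ultimately show ?thesis unfolding ifix_def by (rule Max_ge)
  qed
  have fxpos: "fx > 0" using x9 by (cases fx) auto
  have rp: "(real m ^ e) powr (1/9) = real m powr (real e / 9)" if e0: "e > 0" for m e :: nat
  proof (cases "m = 0")
    case True then show ?thesis using e0 by (cases e) auto
  next
    case False
    then have "real m ^ e = real m powr (real e)" using powr_realpow[of "real m" e] by simp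
    then show ?thesis by (simp add: powr_powr)
  qed
  have "real n powr (4/9) = (real n ^ 4) powr (1/9)" using rp[where m=n and e=4] by simp
  also have "\<dots> < (real fx ^ 9) powr (1/9)"
  proof (rule powr_less_mono2)
    show "real n ^ 4 < real fx ^ 9" using x9 by (metis of_nat_less_iff of_nat_power)
  qed auto
  also have "\<dots> = real fx" using rp[where m=fx and e=9] fxpos by simp
  also have "\<dots> \<le> real (ifix G H (carrier (Alt_grp (prod_dom k r))))" using ifx by simp
  finally show ?thesis by (simp add: n_def H_def)
qed

end
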